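(* Let $\mathcal{C}$ be a small category in which no composite of non-identity morphisms is an identity, and let $M$ be a $k\mathcal{C}$-module such that $[M]$ is a $0$-cocycle in $\mathsf{E}^0(\mathcal{C},k)$, i.e. $\partial_0^*M\cong\partial_1^*M$ as $k\mathcal{E}^{\mathcal{C}}_1$-modules. Then for every square-component $\mathcal{M}$ of $\mathcal{C}$ containing at least two distinct (non-identity) morphisms, $M(u)$ is an isomorphism for every $u\in\mathcal{M}$.
   Context: A $k\mathcal{C}$-module is a functor from $\mathcal{C}$ to finite-dimensional $k$-vector spaces ($k$ a field); $F^*M=M\circ F$. $\mathcal{E}^{\mathcal{C}}_1$ is the category whose objects are the non-identity morphisms $u:a\to b$ of $\mathcal{C}$ (written $[u]$), and whose morphisms $[u]\to[v]$ (with $v:c\to d$) are pairs $(f_0,f_1)$, $f_0:a\to c$, $f_1:b\to d$, with $f_1u=vf_0$. The functors $\partial_0,\partial_1:\mathcal{E}^{\mathcal{C}}_1\to\mathcal{C}$ are $\partial_0[u]=b$, $\partial_0(f_0,f_1)=f_1$ and $\partial_1[u]=a$, $\partial_1(f_0,f_1)=f_0$. (This is the degree-1 part of the semi-simplicial object $\mathcal{E}^{\mathcal{C}}_\bullet$ of non-degenerate strings, whose degree-0 part is $\mathcal{C}$; $\mathsf{E}^0(\mathcal{C},k)$ is the kernel of $d^0=\partial_0^*-\partial_1^*$ on the split Grothendieck group of $k\mathcal{C}$-modules.) A set of non-identity morphisms of $\mathcal{C}$ is a square-component if the full subcategory of $\mathcal{E}^{\mathcal{C}}_1$ on it is a connected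 component of $\mathcal{E}^{\mathcal{C}}_1$. *)

theory Defs
  imports "Jordan_Normal_Form.Matrix"
begin

text \<open>A small category: a set of objects, a set of morphisms, domain/codomain maps,
  identities, and composition (comp g f = g after f, defined when Cod f = Dom g).\<close>

record ('o, 'm) cat =
  Obj :: "'o set"
  Mor :: "'m set"
  Dom :: "'m \<Rightarrow> 'o"
  Cod :: "'m \<Rightarrow> 'o"
  Id  :: "'o \<Rightarrow> 'm"
  comp :: "'m \<Rightarrow> 'm \<Rightarrow> 'm"

definition category :: "('o, 'm) cat \<Rightarrow> bool" where
  "category C \<longleftrightarrow>
     (\<forall>f\<in>Mor C. Dom C f \<in> Obj C \<and> Cod C f \<in> Obj C) \<and>
     (\<forall>a\<in>Obj C. Id C a \<in> Mor C \<and> Dom C (Id C a) = a \<and> Cod C (Id C a) = a) \<and>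
     (\<forall>f\<in>Mor C. \<forall>g\<in>Mor C. Cod C f = Dom C g \<longrightarrow>
        comp C g f \<in> Mor C \<and> Dom C (comp C g f) = Dom C f \<and> Cod C (comp C g f) = Cod C g) \<and>
     (\<forall>f\<in>Mor C. comp C (Id C (Cod C f)) f = f \<and> comp C f (Id C (Dom C f)) = f) \<and>
     (\<forall>f\<in>Mor C. \<forall>g\<in>Mor C. \<forall>h\<in>Mor C. Cod C f = Dom C g \<longrightarrow> Cod C g = Dom C h \<longrightarrow>
        comp C h (comp C g f) = comp C (comp C h g) f)"

text \<open>Non-identity morphisms (the objects [u] of E_1^C).\<close>
definition nonid :: "('o, 'm) cat \<Rightarrow> 'm set" where
  "nonid C = {u \<in> Mor C. u \<noteq> Id C (Dom C u)}"

definition no_id_composites :: "('o, 'm) cat \<Rightarrow> bool" where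
  "no_id_composites C \<longleftrightarrow>
     (\<forall>f\<in>nonid C. \<forall>g\<in>nonid C. Cod C f = Dom C g \<longrightarrow> comp C g f \<noteq> Id C (Dom C f))"

definition E1_hom :: "('o, 'm) cat \<Rightarrow> 'm \<Rightarrow> 'm \<Rightarrow> ('m \<times> 'm) set" where
  "E1_hom C u v = {(f0, f1). f0 \<in> Mor C \<and> f1 \<in> Mor C \<and>
      Dom C f0 = Dom C u \<and> Cod C f0 = Dom C v \<and>
      Dom C f1 = Cod C u \<and> Cod C f1 = Cod C v \<and>
      comp C f1 u = comp C v f0}"

text \<open>A kC-module (functor to finite-dimensional k-vector spaces), presented up to
  isomorphism: object a goes to k^(n a), morphism f goes to an (n (Cod f)) x (n (Dom f)) matrix.\<close>
definition kmodule :: "('o, 'm) cat \<Rightarrow> ('o \<Rightarrow> nat) \<Rightarrow> ('m \<Rightarrow> 'k::field mat) \<Rightarrow> bool" where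
  "kmodule C n M \<longleftrightarrow>
     (\<forall>f\<in>Mor C. M f \<in> carrier_mat (n (Cod C f)) (n (Dom C f))) \<and>
     (\<forall>a\<in>Obj C. M (Id C a) = 1\<^sub>m (n a)) \<and>
     (\<forall>f\<in>Mor C. \<forall>g\<in>Mor C. Cod C f = Dom C g \<longrightarrow> M (comp C g f) = M g * M f)"

text \<open>partial_0^* M \<cong> partial_1^* M as kE_1^C-modules: a natural isomorphism
  phi_[u] : M(Cod u) \<rightarrow> M(Dom u), natural in morphisms (f0,f1) of E_1^C.\<close>
definition d0_d1_iso :: "('o, 'm) cat \<Rightarrow> ('o \<Rightarrow> nat) \<Rightarrow> ('m \<Rightarrow> 'k::field mat) \<Rightarrow> bool" where
  "d0_d1_iso C n M \<longleftrightarrow>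
     (\<exists>phi :: 'm \<Rightarrow> 'k mat.
        (\<forall>u\<in>nonid C. phi u \<in> carrier_mat (n (Dom C u)) (n (Cod C u)) \<and> invertible_mat (phi u)) \<and>
        (\<forall>u\<in>nonid C. \<forall>v\<in>nonid C. \<forall>(f0, f1)\<in>E1_hom C u v.
            phi v * M f1 = M f0 * phi u))"

text \<open>Connectedness in E_1^C: the equivalence relation generated by the existence of a morphism.\<close>
definition E1_rel :: "('o, 'm) cat \<Rightarrow> ('m \<times> 'm) set" where
  "E1_rel C = {(u, v). u \<in> nonid C \<and> v \<in> nonid C \<and> E1_hom C u v \<noteq> {}}"

definition square_component :: "('o, 'm) cat \<Rightarrow> 'm set \<Rightarrow> bool" where
  "square_component C S \<longleftrightarrow>
     (\<exists>u\<in>nonid C. S = {v. (u, v) \<in> (E1_rel C \<union> (E1_rel C)\<inverse>)\<^sup>*})"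

end

theory Submission
  imports Defs "Jordan_Normal_Form.Determinant"
begin

lemma inv_det:
  fixes A :: "'k::field mat"
  assumes A: "A \<in> carrier_mat m m"
  shows "invertible_mat A \<longleftrightarrow> det A \<noteq> 0"
proof
  assume "invertible_mat A"
  then obtain B where AB: "A * B = 1\<^sub>m (dim_row A)" and BA: "B * A = 1\<^sub>m (dim_row B)"
    unfolding invertible_mat_def inverts_mat_def by blast
  have "dim_col B = m" using arg_cong[OF AB, of dim_col] A by simp
  moreover have "dim_row B = m" using arg_cong[OF BA, of dim_col] A by simp
  ultimately have B: "B \<in> carrier_mat m m" by auto
  have "det (A * B) = 1" using AB A by simp
  then show "det A \<noteq> 0" using det_mult[OF A B] by auto
next
  assume "det A \<noteq> 0"
  from det_non_zero_imp_unit[OF A this, of "()"]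
  obtain B where B: "B \<in> carrier_mat m m" and "B * A = 1\<^sub>m m" "A * B = 1\<^sub>m m"
    unfolding Units_def ring_mat_def by auto
  then show "invertible_mat A" using A
    unfolding invertible_mat_def inverts_mat_def square_mat.simps by auto
qed

lemma nbr:
  assumes "(a, x) \<in> (R \<union> R\<inverse>)\<^sup>*"
  shows "a \<noteq> x \<longrightarrow> (\<exists>y. (a, y) \<in> R \<union> R\<inverse> \<and> y \<noteq> a)"
  using assms
proof (induction rule: converse_rtrancl_induct)
  case base
  then show ?case by simp
next
  case (step a y)
  then show ?case by blast
qed

theorem proposition4p1:
  fixes C :: "('o, 'm) cat" and n :: "'o \<Rightarrow> nat" and M :: "'m \<Rightarrow> 'k::field mat"
    and S :: "'m set"
  assumes "category C"
    and "no_id_composites C"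
    and "kmodule C n M"
    and "d0_d1_iso C n M"
    and "square_component C S"
    and "\<exists>u\<in>S. \<exists>v\<in>S. u \<noteq> v"
  shows "\<forall>u\<in>S. invertible_mat (M u)"
proof
  note cat = assms(1)[unfolded category_def]
  have DC: "\<And>f. f \<in> Mor C \<Longrightarrow> Dom C f \<in> Obj C \<and> Cod C f \<in> Obj C" using cat by blast
  have IdP: "\<And>a. a \<in> Obj C \<Longrightarrow> Id C a \<in> Mor C \<and> Dom C (Id C a) = a \<and> Cod C (Id C a) = a"
    using cat by blast
  have CompP: "\<And>f g. f \<in> Mor C \<Longrightarrow> g \<in> Mor C \<Longrightarrow> Cod C f = Dom C g \<Longrightarrow>
        comp C g f \<in> Mor C \<and> Dom C (comp C g f) = Dom C f \<and> Cod C (comp C g f) = Cod C g"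
    using cat by blast
  have IdL: "\<And>f. f \<in> Mor C \<Longrightarrow> comp C (Id C (Cod C f)) f = f" using cat by blast
  have IdR: "\<And>f. f \<in> Mor C \<Longrightarrow> comp C f (Id C (Dom C f)) = f" using cat by blast
  note km = assms(3)[unfolded kmodule_def]
  have Mc: "\<And>f. f \<in> Mor C \<Longrightarrow> M f \<in> carrier_mat (n (Cod C f)) (n (Dom C f))" using km by blast
  have MId: "\<And>a. a \<in> Obj C \<Longrightarrow> M (Id C a) = 1\<^sub>m (n a)" using km by blast
  have Mcomp: "\<And>f g. f \<in> Mor C \<Longrightarrow> g \<in> Mor C \<Longrightarrow> Cod C f = Dom C g \<Longrightarrow> M (comp C g f) = M g * M f"
    using km by blast
  obtain phi :: "'m \<Rightarrow> 'k mat" where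
    ph1: "\<And>u. u \<in> nonid C \<Longrightarrow> phi u \<in> carrier_mat (n (Dom C u)) (n (Cod C u)) \<and> invertible_mat (phi u)"
    and ph2: "\<And>u v f0 f1. u \<in> nonid C \<Longrightarrow> v \<in> nonid C \<Longrightarrow> (f0, f1) \<in> E1_hom C u v \<Longrightarrow>
            phi v * M f1 = M f0 * phi u"
    using assms(4) unfolding d0_d1_iso_def by fast
  have nonidD: "\<And>u. u \<in> nonid C \<Longrightarrow> u \<in> Mor C \<and> u \<noteq> Id C (Dom C u)" unfolding nonid_def by auto
  have isid: "\<And>f. f \<in> Mor C \<Longrightarrow> f \<notin> nonid C \<Longrightarrow> f = Id C (Dom C f)" unfolding nonid_def by auto
  have neq: "\<And>u. u \<in> nonid C \<Longrightarrow> n (Dom C u) = n (Cod C u)"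
  proof -
    fix u assume "u \<in> nonid C"
    from ph1[OF this] show "n (Dom C u) = n (Cod C u)"
      unfolding invertible_mat_def square_mat.simps by auto
  qed
  have dphi: "\<And>u. u \<in> nonid C \<Longrightarrow> det (phi u) \<noteq> 0"
  proof -
    fix u assume u: "u \<in> nonid C"
    from ph1[OF u] neq[OF u] have "phi u \<in> carrier_mat (n (Dom C u)) (n (Dom C u))" "invertible_mat (phi u)"
      by auto
    then show "det (phi u) \<noteq> 0" using inv_det by blast
  qed
  have compnon: "\<And>f g. f \<in> nonid C \<Longrightarrow> g \<in> nonid C \<Longrightarrow> Cod C f = Dom C g \<Longrightarrow> comp C g f \<in> nonid C"
  proof -
    fix f g assume f: "f \<in> nonid C" and g: "g \<in> nonid C" and fg: "Cod C f = Dom C g"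
    have "comp C g f \<noteq> Id C (Dom C f)" using assms(2) f g fg unfolding no_id_composites_def by blast
    then show "comp C g f \<in> nonid C" using CompP[OF _ _ fg] nonidD[OF f] nonidD[OF g]
      unfolding nonid_def by auto
  qed
  have key: "\<And>u v f0 f1. u \<in> nonid C \<Longrightarrow> v \<in> nonid C \<Longrightarrow> f0 \<in> Mor C \<Longrightarrow> f1 \<in> Mor C \<Longrightarrow>
      Dom C f0 = Dom C u \<Longrightarrow> Cod C f0 = Dom C v \<Longrightarrow> Dom C f1 = Cod C u \<Longrightarrow> Cod C f1 = Cod C v \<Longrightarrow>
      comp C f1 u = comp C v f0 \<Longrightarrow> n (Cod C u) = n (Cod C v) \<Longrightarrow> det (phi v) * det (M f1) = det (M f0) * det (phi u)"
  proof -
    fix u v f0 f1 assume u: "u \<in> nonid C" and v: "v \<in> nonid C" and f0: "f0 \<in> Mor C" and f1: "f1 \<in> Mor C"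
      and h: "Dom C f0 = Dom C u" "Cod C f0 = Dom C v" "Dom C f1 = Cod C u" "Cod C f1 = Cod C v"
      "comp C f1 u = comp C v f0" and nn: "n (Cod C u) = n (Cod C v)"
    have "(f0, f1) \<in> E1_hom C u v" using f0 f1 h unfolding E1_hom_def by auto
    from ph2[OF u v this] have eq: "phi v * M f1 = M f0 * phi u" .
    let ?N = "n (Dom C u)"
    have c1: "phi v \<in> carrier_mat ?N ?N" using ph1[OF v] neq[OF u] neq[OF v] h nn by simp
    have c2: "M f1 \<in> carrier_mat ?N ?N" using Mc[OF f1] neq[OF u] neq[OF v] h nn by simp
    have c3: "M f0 \<in> carrier_mat ?N ?N" using Mc[OF f0] neq[OF u] neq[OF v] h nn by simp
    have c4: "phi u \<in> carrier_mat ?N ?N" using ph1[OF u] neq[OF u] by simp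
    show "det (phi v) * det (M f1) = det (M f0) * det (phi u)"
      using arg_cong[OF eq, of det] det_mult[OF c1 c2] det_mult[OF c3 c4] by simp
  qed
  have detId: "\<And>a. a \<in> Obj C \<Longrightarrow> det (M (Id C a)) = 1" using MId by simp
  have detcomp: "\<And>f g. f \<in> Mor C \<Longrightarrow> g \<in> Mor C \<Longrightarrow> Cod C f = Dom C g \<Longrightarrow>
      n (Dom C f) = n (Cod C f) \<Longrightarrow> n (Dom C g) = n (Cod C g) \<Longrightarrow>
      det (M (comp C g f)) = det (M g) * det (M f)"
  proof -
    fix f g assume f: "f \<in> Mor C" and g: "g \<in> Mor C" and fg: "Cod C f = Dom C g"
      and nf: "n (Dom C f) = n (Cod C f)" and ng: "n (Dom C g) = n (Cod C g)"
    have c1: "M g \<in> carrier_mat (n (Dom C f)) (n (Dom C f))" using Mc[OF g] nf ng fg by simp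
    have c2: "M f \<in> carrier_mat (n (Dom C f)) (n (Dom C f))" using Mc[OF f] nf ng fg by simp
    show "det (M (comp C g f)) = det (M g) * det (M f)" using Mcomp[OF f g fg] det_mult[OF c1 c2] by simp
  qed
  fix u assume uS: "u \<in> S"
  obtain u0 where u0: "u0 \<in> nonid C" and Sdef: "S = {v. (u0, v) \<in> (E1_rel C \<union> (E1_rel C)\<inverse>)\<^sup>*}"
    using assms(5) unfolding square_component_def by blast
  let ?R = "E1_rel C \<union> (E1_rel C)\<inverse>"
  have symR: "\<And>a b. (a, b) \<in> ?R\<^sup>* \<Longrightarrow> (b, a) \<in> ?R\<^sup>*"
  proof -
    fix a b assume "(a, b) \<in> ?R\<^sup>*"
    then have "(b, a) \<in> (?R\<^sup>*)\<inverse>" by simp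
    also have "(?R\<^sup>*)\<inverse> = (?R\<inverse>)\<^sup>*" by (simp add: rtrancl_converse)
    also have "?R\<inverse> = ?R" by auto
    finally show "(b, a) \<in> ?R\<^sup>*" .
  qed
  obtain x where xS: "x \<in> S" and ux: "u \<noteq> x" using assms(6) uS by blast
  have "(u, x) \<in> ?R\<^sup>*" using uS xS Sdef symR by (blast intro: rtrancl_trans)
  from nbr[OF this] ux obtain v where uv: "(u, v) \<in> ?R" and vu: "v \<noteq> u" by blast
  then have u: "u \<in> nonid C" and v: "v \<in> nonid C" unfolding E1_rel_def by auto
  have "det (M u) \<noteq> 0"
proof -
    have uM: "u \<in> Mor C" and vM: "v \<in> Mor C" using nonidD u v by auto
    have oa: "Dom C u \<in> Obj C" "Cod C u \<in> Obj C" "Dom C v \<in> Obj C" "Cod C v \<in> Obj C"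
      using DC uM vM by auto
    from uv consider (A) "E1_hom C u v \<noteq> {}" | (B) "E1_hom C v u \<noteq> {}" unfolding E1_rel_def by auto
    then show ?thesis
    proof cases
      case A
      then obtain f0 f1 where "(f0, f1) \<in> E1_hom C u v" by auto
      then have f0: "f0 \<in> Mor C" and f1: "f1 \<in> Mor C" and h: "Dom C f0 = Dom C u" "Cod C f0 = Dom C v"
        "Dom C f1 = Cod C u" "Cod C f1 = Cod C v" "comp C f1 u = comp C v f0" unfolding E1_hom_def by auto
      show ?thesis
      proof (cases "f1 \<in> nonid C")
        case True
        have w: "comp C f1 u \<in> nonid C" using compnon[OF u True] h by simp
        have wD: "Dom C (comp C f1 u) = Dom C u" using CompP[OF uM f1] h by simp
        have "comp C f1 u = comp C (comp C f1 u) (Id C (Dom C u))" using IdR[OF CompP[OF uM f1, THEN conjunct1]] h wD by simp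
        from key[OF u w IdP[OF oa(1), THEN conjunct1] f1] this h wD IdP[OF oa(1)] CompP[OF uM f1] neq[OF True] neq[OF u]
        have "det (phi (comp C f1 u)) * det (M f1) = det (M (Id C (Dom C u))) * det (phi u)" by simp
        then have d1: "det (M f1) \<noteq> 0" using dphi[OF u] detId[OF oa(1)] by auto
        have "det (phi f1) * det (M f1) = det (M u) * det (phi u)"
          using key[OF u True uM f1] h neq[OF True] neq[OF u] by simp
        then show ?thesis using d1 dphi[OF u] dphi[OF True] by auto
      next
        case False
        then have f1i: "f1 = Id C (Cod C u)" using isid[OF f1] IdP[OF DC[OF f1, THEN conjunct1]] h by metis
        have ueq: "u = comp C v f0" using h(5) f1i IdL[OF uM] by simp
        have f0n: "f0 \<in> nonid C"
        proof (rule ccontr)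
          assume "f0 \<notin> nonid C"
          then have "f0 = Id C (Dom C v)" using isid[OF f0] IdP[OF DC[OF f0, THEN conjunct1]] h by metis
          then have "u = v" using ueq IdR[OF vM] by metis
          then show False using vu by simp
        qed
        have "det (phi v) * det (M f1) = det (M f0) * det (phi u)" using key[OF u v f0 f1] h f1i IdP[OF oa(2)] by simp
        then have d0: "det (M f0) \<noteq> 0" using f1i detId[OF oa(2)] dphi[OF v] by auto
        have cvu: "Cod C v = Cod C u" using h(4) f1i IdP[OF oa(2)] by metis
        have "comp C v f0 = comp C u (Id C (Dom C f0))" using ueq[symmetric] IdR[OF uM] h by simp
        then have "det (phi u) * det (M v) = det (M (Id C (Dom C f0))) * det (phi f0)"
          using key[OF f0n u IdP[OF oa(1), THEN conjunct1] vM] h IdP[OF oa(1)] neq[OF f0n] neq[OF u] cvu by simp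
        then have dv: "det (M v) \<noteq> 0" using detId[OF oa(1)] h dphi[OF f0n] by auto
        have "det (M (comp C v f0)) = det (M v) * det (M f0)"
          using detcomp[OF f0 vM h(2)] neq[OF f0n] neq[OF v] by simp
        then have "det (M u) = det (M v) * det (M f0)" using ueq by metis
        then show ?thesis using d0 dv by simp
      qed
    next
      case B
      then obtain f0 f1 where "(f0, f1) \<in> E1_hom C v u" by auto
      then have f0: "f0 \<in> Mor C" and f1: "f1 \<in> Mor C" and h: "Dom C f0 = Dom C v" "Cod C f0 = Dom C u"
        "Dom C f1 = Cod C v" "Cod C f1 = Cod C u" "comp C f1 v = comp C u f0" unfolding E1_hom_def by auto
      show ?thesis
      proof (cases "f0 \<in> nonid C")
        case True
        have w: "comp C u f0 \<in> nonid C" using compnon[OF True u h(2)] .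
        have cw: "comp C u f0 \<in> Mor C" "Dom C (comp C u f0) = Dom C f0" "Cod C (comp C u f0) = Cod C u"
          using CompP[OF f0 uM h(2)] by blast+
        have nf: "n (Cod C f0) = n (Cod C u)" using neq[OF True] neq[OF u] h(2) by metis
        have e1: "det (phi u) * det (M u) = det (M f0) * det (phi f0)"
          using key[OF True u f0 uM refl h(2) h(2)[symmetric] refl refl nf] .
        have iM: "Id C (Cod C u) \<in> Mor C" and iD: "Dom C (Id C (Cod C u)) = Cod C u"
          and iC: "Cod C (Id C (Cod C u)) = Cod C u" using IdP[OF oa(2)] by blast+
        have iD': "Dom C (Id C (Cod C u)) = Cod C (comp C u f0)" using iD cw(3) by simp
        have ce: "comp C (Id C (Cod C u)) (comp C u f0) = comp C u f0"
          using IdL[OF cw(1)] cw(3) by metis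
        have "det (phi u) * det (M (Id C (Cod C u))) = det (M f0) * det (phi (comp C u f0))"
          using key[OF w u f0 iM cw(2)[symmetric] h(2) iD' iC ce] cw(3) by simp
        then have "det (M f0) \<noteq> 0" using detId[OF oa(2)] dphi[OF u] by auto
        then show ?thesis using e1 dphi[OF u] dphi[OF True] by auto
      next
        case False
        then have f0i: "f0 = Id C (Dom C u)" using isid[OF f0] IdP[OF DC[OF f0, THEN conjunct1]] h by metis
        have dvu: "Dom C v = Dom C u" using h(1) f0i IdP[OF oa(1)] by metis
        have ueq: "u = comp C f1 v"
        proof -
          have "comp C f1 v = comp C u (Id C (Dom C u))" using h(5) f0i by metis
          then show ?thesis using IdR[OF uM] by metis
        qed
        have f1n: "f1 \<in> nonid C"
        proof (rule ccontr)
          assume "f1 \<notin> nonid C"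
          then have "f1 = Id C (Cod C v)" using isid[OF f1] IdP[OF DC[OF f1, THEN conjunct1]] h by metis
          then have "u = v" using ueq IdL[OF vM] by metis
          then show False using vu by simp
        qed
        have nvu: "n (Cod C v) = n (Cod C u)" using neq[OF f1n] h(3) h(4) by metis
        have "det (phi u) * det (M f1) = det (M f0) * det (phi v)"
          using key[OF v u f0 f1 h(1) h(2) h(3) h(4) h(5) nvu] .
        then have d1: "det (M f1) \<noteq> 0" using f0i detId[OF oa(1)] dphi[OF v] by auto
        have iM: "Id C (Cod C u) \<in> Mor C" and iD: "Dom C (Id C (Cod C u)) = Cod C u"
          and iC: "Cod C (Id C (Cod C u)) = Cod C u" using IdP[OF oa(2)] by blast+
        have ce: "comp C (Id C (Cod C u)) u = comp C f1 v" using ueq IdL[OF uM] by metis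
        have nuf: "n (Cod C u) = n (Cod C f1)" using h(4) by simp
        have iC': "Cod C (Id C (Cod C u)) = Cod C f1" using iC h(4) by simp
        have "det (phi f1) * det (M (Id C (Cod C u))) = det (M v) * det (phi u)"
          using key[OF u f1n vM iM dvu h(3)[symmetric] iD iC' ce nuf] .
        then have dv: "det (M v) \<noteq> 0" using detId[OF oa(2)] dphi[OF f1n] by auto
        have "det (M (comp C f1 v)) = det (M f1) * det (M v)"
          using detcomp[OF vM f1 h(3)[symmetric] neq[OF v] neq[OF f1n]] .
        then have "det (M u) = det (M f1) * det (M v)" using ueq by metis
        then show ?thesis using d1 dv by simp
      qed
    qed
  qed
  then show "invertible_mat (M u)" using inv_det Mc nonidD[OF u] neq[OF u] by (metis)
qed

end
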